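(* Let $\mathcal X$ be a finite alphabet and let $P_0,P_1,\hat P_0,\hat P_1$ be probability distributions on $\mathcal X$ with $P_0(x),P_1(x),\hat P_0(x),\hat P_1(x)>0$ for all $x\in\mathcal X$. An observation $\mathbf x=(x_1,\dots,x_n)$ is drawn i.i.d. from $P_0$ (hypothesis $0$) or from $P_1$ (hypothesis $1$). For a threshold $\hat\gamma\in\mathbb R$ consider the mismatched likelihood ratio test which, writing $\hat T$ for the type (empirical distribution) of $\mathbf x$, decides hypothesis $1$ if $D(\hat T\|\hat P_0)-D(\hat T\|\hat P_1)\ge\hat\gamma$ and hypothesis $0$ otherwise. Let $\epsilon_0$ be the probability under $P_0^n$ of deciding $1$ and $\epsilon_1$ the probability under $P_1^n$ of deciding $0$, and let $\hat E_i=\liminf_{n\to\infty}-\frac1n\log\epsilon_i$, $i\in\{0,1\}$. Then $$\hat E_0=\min_{Q\in\hat{\mathcal Q}_0}D(Q\|P_0),\qquad \hat E_1=\min_{Q\in\hat{\mathcal Q}_1}D(Q\|P_1),$$ where $\hat{\mathcal Q}_0=\{Q\in\mathcal P(\mathcal X):D(Q\|\hat P_0)-D(Q\|\hat P_1)\ge\hat\gamma\}$ and $\hat{\mathcal Q}_1=\{Q\in\mathcal P(\mathcal X):D(Q\|\hat P_0)-D(Q\|\hat P_1)\le\hat\gamma\}$. The minimizers are, respectively, $$\hat Q_{\lambda_0}(x)=\frac{P_0(x)\hat P_0^{-\lambda_0}(x)\hat P_1^{\lambda_0}(x)}{\sum_{a\in\mathcal X}P_0(a)\hat P_0^{-\lambda_0}(a)\hat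 P_1^{\lambda_0}(a)},\qquad \hat Q_{\lambda_1}(x)=\frac{P_1(x)\hat P_1^{-\lambda_1}(x)\hat P_0^{\lambda_1}(x)}{\sum_{a\in\mathcal X}P_1(a)\hat P_1^{-\lambda_1}(a)\hat P_0^{\lambda_1}(a)},$$ with $\lambda_0,\lambda_1\ge0$, where: if $D(P_0\|\hat P_0)-D(P_0\|\hat P_1)\le\hat\gamma$, then $\lambda_0$ is chosen so that $D(\hat Q_{\lambda_0}\|\hat P_0)-D(\hat Q_{\lambda_0}\|\hat P_1)=\hat\gamma$, and otherwise $\hat Q_{\lambda_0}=P_0$ and $\hat E_0=0$; if $D(P_1\|\hat P_0)-D(P_1\|\hat P_1)\ge\hat\gamma$, then $\lambda_1$ is chosen so that $D(\hat Q_{\lambda_1}\|\hat P_0)-D(\hat Q_{\lambda_1}\|\hat P_1)=\hat\gamma$, and otherwise $\hat Q_{\lambda_1}=P_1$ and $\hat E_1=0$. Furthermore, $$\hat E_0=\max_{\lambda\ge0}\Big\{\lambda\hat\gamma-\log\sum_{x\in\mathcal X}P_0(x)\hat P_0^{-\lambda}(x)\hat P_1^{\lambda}(x)\Big\},\qquad \hat E_1=\max_{\lambda\ge0}\Big\{-\lambda\hat\gamma-\log\sum_{x\in\mathcal X}\hat P_0^{\lambda}(x)P_1(x)\hat P_1^{-\lambda}(x)\Big\}.$$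
   Context: $D(P\|Q)=\sum_x P(x)\log\frac{P(x)}{Q(x)}$ is the relative entropy; $\mathcal P(\mathcal X)$ is the probability simplex on $\mathcal X$. The type of $\mathbf x$ is $\hat T(a)=N(a|\mathbf x)/n$, with $N(a|\mathbf x)$ the number of occurrences of $a$ in $\mathbf x$. Here $P_0,P_1$ are the true distributions and $\hat P_0,\hat P_1$ the (mismatched) distributions used by the test. *)

theory Defs
  imports "HOL-Analysis.Analysis"
begin

text \<open>Relative entropy (natural logarithm; convention 0 log 0 = 0 holds since 0 * _ = 0).\<close>
definition rel_entropy :: "('a::finite \<Rightarrow> real) \<Rightarrow> ('a \<Rightarrow> real) \<Rightarrow> real" where
  "rel_entropy P Q = (\<Sum>x\<in>UNIV. P x * ln (P x / Q x))"

definition prob_simplex :: "('a::finite \<Rightarrow> real) set" where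
  "prob_simplex = {Q. (\<forall>x. 0 \<le> Q x) \<and> (\<Sum>x\<in>UNIV. Q x) = 1}"

definition type_of :: "'a list \<Rightarrow> 'a \<Rightarrow> real" where
  "type_of xs a = real (count_list xs a) / real (length xs)"

definition mm_stat :: "('a::finite \<Rightarrow> real) \<Rightarrow> ('a \<Rightarrow> real) \<Rightarrow> ('a \<Rightarrow> real) \<Rightarrow> real" where
  "mm_stat hP0 hP1 Q = rel_entropy Q hP0 - rel_entropy Q hP1"

definition decides1 :: "('a::finite \<Rightarrow> real) \<Rightarrow> ('a \<Rightarrow> real) \<Rightarrow> real \<Rightarrow> 'a list \<Rightarrow> bool" where
  "decides1 hP0 hP1 g xs \<longleftrightarrow> mm_stat hP0 hP1 (type_of xs) \<ge> g"

definition iid_prob :: "('a::finite \<Rightarrow> real) \<Rightarrow> nat \<Rightarrow> ('a list \<Rightarrow> bool) \<Rightarrow> real" where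
  "iid_prob P n E = (\<Sum>xs\<in>{xs. length xs = n \<and> E xs}. prod_list (map P xs))"

definition err0 :: "('a::finite \<Rightarrow> real) \<Rightarrow> ('a \<Rightarrow> real) \<Rightarrow> ('a \<Rightarrow> real) \<Rightarrow> real \<Rightarrow> nat \<Rightarrow> real" where
  "err0 P0 hP0 hP1 g n = iid_prob P0 n (decides1 hP0 hP1 g)"

definition err1 :: "('a::finite \<Rightarrow> real) \<Rightarrow> ('a \<Rightarrow> real) \<Rightarrow> ('a \<Rightarrow> real) \<Rightarrow> real \<Rightarrow> nat \<Rightarrow> real" where
  "err1 P1 hP0 hP1 g n = iid_prob P1 n (\<lambda>xs. \<not> decides1 hP0 hP1 g xs)"

definition err_exponent :: "(nat \<Rightarrow> real) \<Rightarrow> ereal" where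
  "err_exponent eps = liminf (\<lambda>n. ereal (- ln (eps n) / real n))"

definition tilted :: "('a::finite \<Rightarrow> real) \<Rightarrow> ('a \<Rightarrow> real) \<Rightarrow> ('a \<Rightarrow> real) \<Rightarrow> real \<Rightarrow> 'a \<Rightarrow> real" where
  "tilted P A B l x = P x * A x powr (- l) * B x powr l
      / (\<Sum>a\<in>UNIV. P a * A a powr (- l) * B a powr l)"

end

theory Submission
  imports Defs
begin


lemma iid_prob_if:
  "iid_prob P n E = (\<Sum>xs\<in>{xs. length xs = n}. if E xs then prod_list (map P xs) else 0)"
proof -
  have "{xs. length xs = n \<and> E xs} = {xs \<in> {xs. length xs = n}. E xs}" by auto
  then show ?thesis unfolding iid_prob_def using sum.inter_filter[OF finite_list_length] by simp
qed

lemma prod_list_nonneg_map: "(\<And>x. 0 \<le> P x) \<Longrightarrow> 0 \<le> prod_list (map (P::'a\<Rightarrow>real) xs)"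
  by (induction xs) auto

lemma prod_list_pos_map: "(\<And>x. 0 < P x) \<Longrightarrow> 0 < prod_list (map (P::'a\<Rightarrow>real) xs)"
  by (induction xs) auto

lemma iid_prob_mono:
  assumes "\<And>x. 0 \<le> P x" "\<And>xs. length xs = n \<Longrightarrow> E xs \<Longrightarrow> F xs"
  shows "iid_prob P n E \<le> iid_prob P n F"
  unfolding iid_prob_if
  by (rule sum_mono) (auto simp: assms prod_list_nonneg_map)

lemma iid_prob_nonneg:
  assumes "\<And>x. 0 \<le> P x"
  shows "0 \<le> iid_prob P n E"
  unfolding iid_prob_if
  by (rule sum_nonneg) (auto simp: assms prod_list_nonneg_map)

lemma iid_prob_sub3:
  assumes "\<And>x. 0 \<le> P x" "\<And>xs. length xs = n \<Longrightarrow> E xs \<Longrightarrow> F xs \<or> G xs \<or> H xs"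
  shows "iid_prob P n E \<le> iid_prob P n F + iid_prob P n G + iid_prob P n H"
  unfolding iid_prob_if sum.distrib[symmetric]
  by (rule sum_mono) (use assms(2) in \<open>auto simp: assms(1) prod_list_nonneg_map\<close>)

lemma iid_prob_scale:
  assumes "\<And>x. 0 \<le> Q x" "\<And>xs. length xs = n \<Longrightarrow> E xs \<Longrightarrow> c * prod_list (map Q xs) \<le> prod_list (map P xs)"
  shows "c * iid_prob Q n E \<le> iid_prob P n E"
  unfolding iid_prob_if sum_distrib_left
  by (rule sum_mono) (auto simp: assms prod_list_nonneg_map)

lemma lists_Suc: "{xs. length xs = Suc n} = (\<lambda>(a,xs). a # xs) ` (UNIV \<times> {xs. length xs = n})"
  by (auto simp: image_iff length_Suc_conv)

lemma sum_lists_prod: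
  fixes h :: "'a::finite \<Rightarrow> real"
  shows "(\<Sum>xs\<in>{xs. length xs = n}. prod_list (map h xs)) = (\<Sum>a\<in>UNIV. h a) ^ n"
proof (induction n)
  case 0
  have "{xs::'a list. length xs = 0} = {[]}" by auto
  then show ?case by simp
next
  case (Suc n)
  have inj: "inj_on (\<lambda>(a,xs). a # xs) (UNIV \<times> {xs::'a list. length xs = n})"
    by (auto simp: inj_on_def)
  have "(\<Sum>xs\<in>{xs. length xs = Suc n}. prod_list (map h xs))
      = (\<Sum>p\<in>UNIV \<times> {xs::'a list. length xs = n}. h (fst p) * prod_list (map h (snd p)))"
    unfolding lists_Suc by (subst sum.reindex[OF inj]) (simp add: case_prod_beta)
  also have "\<dots> = (\<Sum>a\<in>UNIV. \<Sum>xs\<in>{xs::'a list. length xs = n}. h a * prod_list (map h xs))"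
    by (subst sum.cartesian_product) (rule sum.cong, auto)
  also have "\<dots> = (\<Sum>a\<in>UNIV. h a) * (\<Sum>xs\<in>{xs::'a list. length xs = n}. prod_list (map h xs))"
    by (rule sum_product[symmetric])
  finally show ?case using Suc by simp
qed

lemma iid_prob_True:
  assumes "P \<in> prob_simplex"
  shows "iid_prob P n (\<lambda>_. True) = 1"
  using assms unfolding iid_prob_def prob_simplex_def by (simp add: sum_lists_prod)

lemma prod_list_exp:
  "prod_list (map (\<lambda>x. a x * exp (b x)) xs) = prod_list (map a xs) * exp (sum_list (map (b::'a\<Rightarrow>real) xs))"
  by (induction xs) (auto simp: exp_add algebra_simps)

lemma sum_list_minus_const:
  "sum_list (map (\<lambda>x. u x - c) xs) = sum_list (map u xs) - real (length xs) * c"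
  by (induction xs) (auto simp: algebra_simps)

lemma sum_list_tmc:
  "sum_list (map (\<lambda>x. t * (u x - c)) xs) = t * (sum_list (map u xs) - real (length xs) * (c::real))"
  by (induction xs) (auto simp: algebra_simps)

lemma chernoff:
  fixes P u :: "'a::finite \<Rightarrow> real"
  assumes "\<And>x. 0 \<le> P x" "0 \<le> t"
    and "\<And>xs. length xs = n \<Longrightarrow> E xs \<Longrightarrow> real n * c \<le> sum_list (map u xs)"
  shows "iid_prob P n E \<le> (\<Sum>a\<in>UNIV. P a * exp (t * (u a - c))) ^ n"
proof -
  have "iid_prob P n E \<le> (\<Sum>xs\<in>{xs. length xs = n}. prod_list (map (\<lambda>a. P a * exp (t * (u a - c))) xs))"
    unfolding iid_prob_if
  proof (rule sum_mono)
    fix xs :: "'a list" assume xs: "xs \<in> {xs. length xs = n}"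
    have eq: "prod_list (map (\<lambda>a. P a * exp (t * (u a - c))) xs)
        = prod_list (map P xs) * exp (t * (sum_list (map u xs) - real n * c))"
      using xs by (simp add: prod_list_exp sum_list_tmc)
    show "(if E xs then prod_list (map P xs) else 0)
         \<le> prod_list (map (\<lambda>a. P a * exp (t * (u a - c))) xs)"
    proof (cases "E xs")
      case True
      then have "0 \<le> t * (sum_list (map u xs) - real n * c)" using assms(2,3) xs by simp
      then have "1 \<le> exp (t * (sum_list (map u xs) - real n * c))" by simp
      then show ?thesis using True eq prod_list_nonneg_map[of P xs, OF assms(1)]
        by (simp add: mult_le_cancel_left1)
    next
      case False
      then show ?thesis unfolding eq using prod_list_nonneg_map[of P xs, OF assms(1)] by simp
    qed
  qed
  then show ?thesis by (simp add: sum_lists_prod)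
qed



lemma sum_list_neg: "sum_list (map (\<lambda>x. - u x) xs) = - sum_list (map (u::'a\<Rightarrow>real) xs)"
  by (induction xs) auto

lemma small_dev:
  fixes Q u :: "'a::finite \<Rightarrow> real"
  assumes Q: "Q \<in> prob_simplex" and c: "c < (\<Sum>a\<in>UNIV. Q a * u a)"
  shows "\<exists>r. 0 \<le> r \<and> r < 1 \<and> (\<forall>n. iid_prob Q n (\<lambda>xs. sum_list (map u xs) \<le> real n * c) \<le> r ^ n)"
proof -
  define M where "M t = (\<Sum>a\<in>UNIV. Q a * exp (t * ((- u a) - (- c))))" for t
  have Q0: "\<And>x. 0 \<le> Q x" and Q1: "(\<Sum>a\<in>UNIV. Q a) = 1" using Q by (auto simp: prob_simplex_def)
  have d: "(M has_real_derivative (\<Sum>a\<in>UNIV. Q a * ((- u a) - (- c)))) (at 0)"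
    unfolding M_def by (auto intro!: derivative_eq_intros sum.cong)
  have "(\<Sum>a\<in>UNIV. Q a * ((- u a) - (- c))) = c * (\<Sum>a\<in>UNIV. Q a) - (\<Sum>a\<in>UNIV. Q a * u a)"
    by (simp add: algebra_simps sum_subtractf sum_distrib_left)
  also have "\<dots> < 0" using c Q1 by simp
  finally obtain d where d0: "d > 0" and dd: "\<And>h. h > 0 \<Longrightarrow> h < d \<Longrightarrow> M (0 + h) < M 0"
    using DERIV_neg_dec_right[OF d] by blast
  define t where "t = d / 2"
  have t: "t > 0" "t < d" using d0 by (auto simp: t_def)
  have M0: "M 0 = 1" using Q1 by (simp add: M_def)
  have Mt: "M t < 1" using dd[OF t] M0 by simp
  have Mt0: "0 \<le> M t" unfolding M_def by (intro sum_nonneg mult_nonneg_nonneg Q0) auto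
  have "\<forall>n. iid_prob Q n (\<lambda>xs. sum_list (map u xs) \<le> real n * c) \<le> M t ^ n"
  proof
    fix n
    show "iid_prob Q n (\<lambda>xs. sum_list (map u xs) \<le> real n * c) \<le> M t ^ n"
      unfolding M_def
      by (rule chernoff[OF Q0]) (use t in \<open>auto simp: sum_list_neg\<close>)
  qed
  then show ?thesis using Mt Mt0 by blast
qed

lemma gibbs:
  fixes Q R :: "'a::finite \<Rightarrow> real"
  assumes Q: "Q \<in> prob_simplex" and R: "\<And>x. 0 < R x" "(\<Sum>a\<in>UNIV. R a) = 1"
  shows "0 \<le> rel_entropy Q R"
proof -
  have Q0: "\<And>x. 0 \<le> Q x" and Q1: "(\<Sum>a\<in>UNIV. Q a) = 1" using Q by (auto simp: prob_simplex_def)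
  have pw: "Q x - R x \<le> Q x * ln (Q x / R x)" for x
  proof (cases "Q x = 0")
    case True then show ?thesis using R(1)[of x] by simp
  next
    case False
    then have qp: "Q x > 0" using Q0[of x] by simp
    have "ln (R x / Q x) \<le> R x / Q x - 1" using ln_le_minus_one[of "R x / Q x"] qp R(1)[of x] by simp
    moreover have "ln (Q x / R x) = - ln (R x / Q x)" using qp R(1)[of x] by (simp add: ln_div)
    ultimately have "1 - R x / Q x \<le> ln (Q x / R x)" by simp
    then have "Q x * (1 - R x / Q x) \<le> Q x * ln (Q x / R x)" using qp by (simp add: mult_left_mono)
    then show ?thesis using qp by (simp add: algebra_simps)
  qed
  have "0 = (\<Sum>a\<in>UNIV. Q a - R a)" using Q1 R(2) by (simp add: sum_subtractf)
  also have "\<dots> \<le> rel_entropy Q R" unfolding rel_entropy_def by (rule sum_mono) (rule pw)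
  finally show ?thesis .
qed

definition Zf :: "('a::finite \<Rightarrow> real) \<Rightarrow> ('a \<Rightarrow> real) \<Rightarrow> real \<Rightarrow> real" where
  "Zf P f l = (\<Sum>a\<in>UNIV. P a * exp (l * f a))"

definition tilt :: "('a::finite \<Rightarrow> real) \<Rightarrow> ('a \<Rightarrow> real) \<Rightarrow> real \<Rightarrow> 'a \<Rightarrow> real" where
  "tilt P f l x = P x * exp (l * f x) / Zf P f l"

definition mean :: "('a::finite \<Rightarrow> real) \<Rightarrow> ('a \<Rightarrow> real) \<Rightarrow> real" where
  "mean Q f = (\<Sum>a\<in>UNIV. Q a * f a)"

lemma Zf_pos: "(\<And>x. 0 < P x) \<Longrightarrow> 0 < Zf P f l"
  unfolding Zf_def by (intro sum_pos) auto

lemma tilt_pos: "(\<And>x. 0 < P x) \<Longrightarrow> 0 < tilt P f l x"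
  unfolding tilt_def by (intro divide_pos_pos mult_pos_pos) (auto simp: Zf_pos)

lemma tilt_sum: "(\<And>x. 0 < P x) \<Longrightarrow> (\<Sum>a\<in>UNIV. tilt P f l a) = 1"
  unfolding tilt_def using Zf_pos[of P f l] by (simp add: sum_divide_distrib[symmetric] Zf_def)

lemma tilt_simplex: "(\<And>x. 0 < P x) \<Longrightarrow> tilt P f l \<in> prob_simplex"
  unfolding prob_simplex_def using tilt_sum[of P f l] tilt_pos[of P f l] by (auto intro: less_imp_le)

lemma tilt_zero: "P \<in> prob_simplex \<Longrightarrow> tilt P f 0 = P"
  unfolding tilt_def Zf_def prob_simplex_def by auto

lemma decomp:
  fixes Q P f :: "'a::finite \<Rightarrow> real"
  assumes Q: "Q \<in> prob_simplex" and P: "\<And>x. 0 < P x"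
  shows "rel_entropy Q P = rel_entropy Q (tilt P f l) + l * mean Q f - ln (Zf P f l)"
proof -
  have Q0: "\<And>x. 0 \<le> Q x" and Q1: "(\<Sum>a\<in>UNIV. Q a) = 1" using Q by (auto simp: prob_simplex_def)
  have Z: "0 < Zf P f l" using Zf_pos P by blast
  have pw: "Q x * ln (Q x / P x) = Q x * ln (Q x / tilt P f l x) + (l * (Q x * f x) - ln (Zf P f l) * Q x)" for x
  proof (cases "Q x = 0")
    case True then show ?thesis by simp
  next
    case False
    then have qp: "Q x > 0" using Q0[of x] by simp
    have T: "tilt P f l x > 0" using tilt_pos P by blast
    have E: "ln (tilt P f l x) = ln (P x) + l * f x - ln (Zf P f l)"
      unfolding tilt_def using P[of x] Z by (simp add: ln_div ln_mult)
    have "ln (Q x / P x) = ln (Q x / tilt P f l x) + (l * f x - ln (Zf P f l))"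
      using qp T P[of x] by (simp add: ln_div E)
    then show ?thesis by (simp add: distrib_left right_diff_distrib)
  qed
  have "rel_entropy Q P = (\<Sum>x\<in>UNIV. Q x * ln (Q x / tilt P f l x) + (l * (Q x * f x) - ln (Zf P f l) * Q x))"
    unfolding rel_entropy_def using pw by simp
  also have "\<dots> = rel_entropy Q (tilt P f l) + l * mean Q f - ln (Zf P f l)"
    unfolding rel_entropy_def mean_def
    by (simp add: sum.distrib sum_subtractf sum_distrib_left[symmetric] Q1)
  finally show ?thesis .
qed

lemma variational:
  fixes Q P f :: "'a::finite \<Rightarrow> real"
  assumes Q: "Q \<in> prob_simplex" and P: "\<And>x. 0 < P x"
  shows "l * mean Q f - ln (Zf P f l) \<le> rel_entropy Q P"
  using decomp[OF Q P, where f=f and l=l] gibbs[OF Q, of "tilt P f l"] tilt_pos[OF P, where f=f and l=l] tilt_sum[OF P, where f=f and l=l] by simp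

lemma rel_entropy_self: "rel_entropy Q Q = 0"
  unfolding rel_entropy_def by (auto intro!: sum.neutral)

lemma rel_entropy_tl:
  assumes P: "\<And>x. 0 < P x"
  shows "rel_entropy (tilt P f l) P = l * mean (tilt P f l) f - ln (Zf P f l)"
  using decomp[OF tilt_simplex[OF P] P, where f=f and l=l] by (simp add: rel_entropy_self)



lemma eventually_pow_small:
  fixes r :: real assumes "0 \<le> r" "r < 1" "0 < e"
  shows "eventually (\<lambda>n. r ^ n < e) sequentially"
proof -
  have "(\<lambda>n. r ^ n) \<longlonglongrightarrow> 0" using assms by (intro LIMSEQ_power_zero) auto
  then show ?thesis using assms(3) by (rule order_tendstoD(2))
qed

lemma lower_bound:
  fixes P Q f :: "'a::finite \<Rightarrow> real"
  assumes P: "\<And>x. 0 < P x"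
    and Q: "Q \<in> prob_simplex" "\<And>x. 0 < Q x" and mQ: "g < mean Q f" and dl: "0 < \<delta>"
    and E: "\<And>xs. real (length xs) * g < sum_list (map f xs) \<Longrightarrow> E xs"
  shows "eventually (\<lambda>n. exp (- real n * (rel_entropy Q P + \<delta>)) / 2 \<le> iid_prob P n E) sequentially"
proof -
  define h where "h x = ln (Q x / P x)" for x
  define D where "D = rel_entropy Q P"
  have Q0: "\<And>x. 0 \<le> Q x" using Q(2) less_imp_le by blast
  have P0: "\<And>x. 0 \<le> P x" using P less_imp_le by blast
  have hD: "(\<Sum>a\<in>UNIV. Q a * (- h a)) = - D"
    unfolding D_def rel_entropy_def h_def by (simp add: sum_negf)
  obtain r1 where r1: "0 \<le> r1" "r1 < 1"
    "\<And>n. iid_prob Q n (\<lambda>xs. sum_list (map f xs) \<le> real n * g) \<le> r1 ^ n"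
    using small_dev[OF Q(1), of g f] mQ unfolding mean_def by blast
  obtain r2 where r2: "0 \<le> r2" "r2 < 1"
    "\<And>n. iid_prob Q n (\<lambda>xs. sum_list (map (\<lambda>x. - h x) xs) \<le> real n * (- (D + \<delta>))) \<le> r2 ^ n"
    using small_dev[OF Q(1), of "- (D + \<delta>)" "\<lambda>x. - h x"] hD dl by auto
  have ev: "eventually (\<lambda>n. r1 ^ n < 1/4 \<and> r2 ^ n < 1/4) sequentially"
    using eventually_pow_small[OF r1(1,2), of "1/4"] eventually_pow_small[OF r2(1,2), of "1/4"]
    by (auto intro: eventually_conj)
  show ?thesis
    using ev
  proof eventually_elim
    case (elim n)
    define A where "A xs \<longleftrightarrow> real n * g < sum_list (map f xs)
        \<and> \<not> sum_list (map (\<lambda>x. - h x) xs) \<le> real n * (- (D + \<delta>))" for xs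
    have "1 = iid_prob Q n (\<lambda>_. True)" using iid_prob_True[OF Q(1)] by simp
    also have "\<dots> \<le> iid_prob Q n A + iid_prob Q n (\<lambda>xs. sum_list (map f xs) \<le> real n * g)
        + iid_prob Q n (\<lambda>xs. sum_list (map (\<lambda>x. - h x) xs) \<le> real n * (- (D + \<delta>)))"
      by (rule iid_prob_sub3[OF Q0]) (auto simp: A_def)
    finally have QA: "1/2 \<le> iid_prob Q n A" using r1(3)[of n] r2(3)[of n] elim by linarith
    define c where "c = exp (- real n * (D + \<delta>))"
    have "c * iid_prob Q n A \<le> iid_prob P n A"
    proof (rule iid_prob_scale[OF Q0])
      fix xs :: "'a list" assume len: "length xs = n" and A: "A xs"
      have Pe: "P x = Q x * exp (- h x)" for x
        using P[of x] Q(2)[of x] unfolding h_def by (simp add: exp_minus ln_div exp_diff)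
      have "prod_list (map P xs) = prod_list (map (\<lambda>x. Q x * exp (- h x)) xs)"
        by (metis Pe)
      also have "\<dots> = prod_list (map Q xs) * exp (sum_list (map (\<lambda>x. - h x) xs))"
        by (rule prod_list_exp)
      finally have eq: "prod_list (map P xs) = prod_list (map Q xs) * exp (sum_list (map (\<lambda>x. - h x) xs))" .
      have "c \<le> exp (sum_list (map (\<lambda>x. - h x) xs))" using A unfolding c_def A_def by (simp add: algebra_simps)
      then show "c * prod_list (map Q xs) \<le> prod_list (map P xs)"
        unfolding eq using prod_list_nonneg_map[of Q xs, OF Q0] by (metis mult.commute mult_left_mono)
    qed
    also have "\<dots> \<le> iid_prob P n E"
      by (rule iid_prob_mono[OF P0]) (auto simp: A_def intro: E)
    finally have "c * iid_prob Q n A \<le> iid_prob P n E" .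
    moreover have "c / 2 \<le> c * iid_prob Q n A" using QA by (simp add: c_def)
    ultimately show ?case unfolding c_def D_def by linarith
  qed
qed



lemma mean_tilt_minus:
  assumes P: "\<And>x. 0 < P x"
  shows "mean (tilt P f l) f - g = (\<Sum>a\<in>UNIV. P a * exp (l * f a) * (f a - g)) / Zf P f l"
proof -
  have Z: "Zf P f l > 0" using Zf_pos P by blast
  have "mean (tilt P f l) f = (\<Sum>a\<in>UNIV. P a * exp (l * f a) * f a) / Zf P f l"
    unfolding mean_def tilt_def by (simp add: sum_divide_distrib)
  moreover have "g = (\<Sum>a\<in>UNIV. P a * exp (l * f a) * g) / Zf P f l"
    using Z by (simp add: Zf_def sum_distrib_right[symmetric])
  ultimately have "mean (tilt P f l) f - g = (\<Sum>a\<in>UNIV. P a * exp (l * f a) * f a) / Zf P f l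
      - (\<Sum>a\<in>UNIV. P a * exp (l * f a) * g) / Zf P f l" by simp
  also have "\<dots> = ((\<Sum>a\<in>UNIV. P a * exp (l * f a) * f a) - (\<Sum>a\<in>UNIV. P a * exp (l * f a) * g)) / Zf P f l"
    by (simp add: diff_divide_distrib)
  also have "(\<Sum>a\<in>UNIV. P a * exp (l * f a) * f a) - (\<Sum>a\<in>UNIV. P a * exp (l * f a) * g)
      = (\<Sum>a\<in>UNIV. P a * exp (l * f a) * (f a - g))"
    by (simp add: sum_subtractf[symmetric] algebra_simps)
  finally show ?thesis .
qed

lemma big_tilt:
  fixes P f :: "'a::finite \<Rightarrow> real"
  assumes P: "\<And>x. 0 < P x" and x1: "g < f x1"
  shows "\<exists>L\<ge>0. g < mean (tilt P f L) f"
proof -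
  define a where "a = f x1 - g"
  define C where "C = (\<Sum>x\<in>UNIV. P x * \<bar>f x - g\<bar>)"
  define K where "K = C / (P x1 * a)"
  define L where "L = K / a"
  have a: "a > 0" using x1 by (simp add: a_def)
  have C: "C \<ge> 0" unfolding C_def using P by (intro sum_nonneg mult_nonneg_nonneg) (auto intro: less_imp_le)
  have K: "K \<ge> 0" using C a P[of x1] by (simp add: K_def)
  have L: "L \<ge> 0" using K a by (simp add: L_def)
  have "exp (L * a) \<ge> 1 + L * a" by (rule exp_ge_add_one_self)
  moreover have "L * a = K" using a by (simp add: L_def)
  ultimately have eK: "exp (L * a) > K" by linarith
  have "P x1 * a * exp (L * a) > P x1 * a * K" using eK a P[of x1] by simp
  also have "P x1 * a * K = C" using a P[of x1] by (simp add: K_def)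
  finally have key: "P x1 * a * exp (L * a) > C" .
  have pw: "P x * exp (L * f x) * (f x - g) \<ge>
      (if x = x1 then P x1 * exp (L * f x1) * a else 0) - P x * \<bar>f x - g\<bar> * exp (L * g)" for x
  proof (cases "x = x1")
    case True
    have "0 \<le> P x * \<bar>f x - g\<bar> * exp (L * g)" using P[of x] by simp
    then show ?thesis using True by (simp add: a_def)
  next
    case False
    show ?thesis
    proof (cases "f x \<ge> g")
      case True
      then have "0 \<le> P x * exp (L * f x) * (f x - g)" using P[of x] by simp
      moreover have "0 \<le> P x * \<bar>f x - g\<bar> * exp (L * g)" using P[of x] by simp
      ultimately show ?thesis using False by simp
    next
      case ng: False
      have "exp (L * f x) \<le> exp (L * g)" using ng L by (simp add: mult_left_mono)
      then have "P x * exp (L * f x) * \<bar>f x - g\<bar> \<le> P x * exp (L * g) * \<bar>f x - g\<bar>"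
        using P[of x] by (simp add: mult_left_mono mult_right_mono)
      moreover have "P x * exp (L * f x) * (f x - g) = - (P x * exp (L * f x) * \<bar>f x - g\<bar>)"
        using ng by (simp add: algebra_simps)
      ultimately show ?thesis using False by (simp add: algebra_simps)
    qed
  qed
  have "(\<Sum>x\<in>UNIV. (if x = x1 then P x1 * exp (L * f x1) * a else 0) - P x * \<bar>f x - g\<bar> * exp (L * g))
      \<le> (\<Sum>x\<in>UNIV. P x * exp (L * f x) * (f x - g))"
    by (rule sum_mono) (rule pw)
  moreover have "(\<Sum>x\<in>UNIV. (if x = x1 then P x1 * exp (L * f x1) * a else 0) - P x * \<bar>f x - g\<bar> * exp (L * g))
      = P x1 * exp (L * f x1) * a - C * exp (L * g)"
    by (simp add: sum_subtractf C_def sum_distrib_right)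
  moreover have "P x1 * exp (L * f x1) * a - C * exp (L * g) = exp (L * g) * (P x1 * a * exp (L * a) - C)"
    by (simp add: a_def algebra_simps flip: exp_add)
  moreover have "exp (L * g) * (P x1 * a * exp (L * a) - C) > 0" using key by simp
  ultimately have "(\<Sum>x\<in>UNIV. P x * exp (L * f x) * (f x - g)) > 0" by linarith
  then have "mean (tilt P f L) f - g > 0"
    unfolding mean_tilt_minus[OF P] using Zf_pos[of P f L, OF P] by simp
  then show ?thesis using L by auto
qed

lemma cont_Zf: "continuous_on S (Zf P f)"
  unfolding Zf_def by (intro continuous_intros)

lemma cont_mean_tilt:
  assumes P: "\<And>x. 0 < P x"
  shows "continuous_on S (\<lambda>l. mean (tilt P f l) f)"
proof -
  have eq: "(\<lambda>l. mean (tilt P f l) f) = (\<lambda>l. (\<Sum>a\<in>UNIV. P a * exp (l * f a) * f a) / Zf P f l)"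
    unfolding mean_def tilt_def by (simp add: sum_divide_distrib)
  have nz: "\<And>l. Zf P f l \<noteq> 0" using Zf_pos[of P f, OF P] by (metis less_irrefl)
  show ?thesis unfolding eq
    by (intro continuous_intros cont_Zf) (auto simp: nz)
qed

lemma approx:
  fixes P Qs R f :: "'a::finite \<Rightarrow> real"
  assumes P: "\<And>x. 0 < P x" and Qs: "Qs \<in> prob_simplex" "\<And>x. 0 < Qs x" "g \<le> mean Qs f"
    and R: "R \<in> prob_simplex" "\<And>x. 0 < R x" "g < mean R f" and dl: "0 < \<delta>"
  shows "\<exists>Q. Q \<in> prob_simplex \<and> (\<forall>x. 0 < Q x) \<and> g < mean Q f \<and> rel_entropy Q P < rel_entropy Qs P + \<delta>"
proof -
  define Qt where "Qt t x = (1 - t) * Qs x + t * R x" for t x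
  have lim: "((\<lambda>t. rel_entropy (Qt t) P) \<longlongrightarrow> rel_entropy Qs P) (at_right 0)"
    unfolding rel_entropy_def Qt_def
    by (auto intro!: tendsto_eq_intros simp: less_imp_neq[symmetric] Qs(2) P)
  have "eventually (\<lambda>t. rel_entropy (Qt t) P < rel_entropy Qs P + \<delta>) (at_right 0)"
    using lim by (rule order_tendstoD(2)) (use dl in simp)
  moreover have "eventually (\<lambda>t. t < (1::real)) (at_right 0)"
    unfolding eventually_at_right_field by (intro exI[of _ 1]) auto
  ultimately have "eventually (\<lambda>t. rel_entropy (Qt t) P < rel_entropy Qs P + \<delta> \<and> t < 1) (at_right 0)"
    by (rule eventually_conj)
  then obtain b where b: "b > 0" "\<And>y. y > 0 \<Longrightarrow> y < b \<Longrightarrow> rel_entropy (Qt y) P < rel_entropy Qs P + \<delta> \<and> y < 1"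
    unfolding eventually_at_right_field by auto
  define t where "t = b / 2"
  have t: "t > 0" "t < b" using b by (auto simp: t_def)
  from b(2)[OF t] have t1: "t < 1" and rel: "rel_entropy (Qt t) P < rel_entropy Qs P + \<delta>" by auto
  have pos: "\<forall>x. 0 < Qt t x"
  proof
    fix x
    have "0 \<le> (1 - t) * Qs x" using t1 Qs(2)[of x] by simp
    moreover have "0 < t * R x" using t R(2)[of x] by simp
    ultimately show "0 < Qt t x" unfolding Qt_def by linarith
  qed
  have s1: "(\<Sum>a\<in>UNIV. Qs a) = 1" "(\<Sum>a\<in>UNIV. R a) = 1"
    using Qs(1) R(1) by (auto simp: prob_simplex_def)
  have "(\<Sum>a\<in>UNIV. Qt t a) = (1 - t) * (\<Sum>a\<in>UNIV. Qs a) + t * (\<Sum>a\<in>UNIV. R a)"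
    unfolding Qt_def by (simp add: sum.distrib sum_distrib_left)
  then have simp: "Qt t \<in> prob_simplex" using pos s1 by (auto simp: prob_simplex_def intro: less_imp_le)
  have "mean (Qt t) f = (1 - t) * mean Qs f + t * mean R f"
    unfolding Qt_def mean_def by (simp add: sum.distrib sum_distrib_left sum_subtractf ring_distribs left_diff_distrib mult.assoc)
  moreover have "(1 - t) * g \<le> (1 - t) * mean Qs f" using t1 Qs(3) by (simp add: mult_left_mono)
  moreover have "t * g < t * mean R f" using t R(3) by simp
  ultimately have "g < mean (Qt t) f" by (simp add: algebra_simps)
  then show ?thesis using simp pos rel by blast
qed



lemma core:
  fixes P f :: "'a::finite \<Rightarrow> real"
  assumes P: "P \<in> prob_simplex" "\<And>x. 0 < P x" and x1: "g < f x1"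
    and l: "0 \<le> l" "g \<le> mean (tilt P f l) f" "l * mean (tilt P f l) f = l * g"
    and Eu: "\<And>xs. E xs \<Longrightarrow> real (length xs) * g \<le> sum_list (map f xs)"
    and El: "\<And>xs. real (length xs) * g < sum_list (map f xs) \<Longrightarrow> E xs"
  shows "is_arg_min (\<lambda>Q. rel_entropy Q P) (\<lambda>Q. Q \<in> prob_simplex \<and> g \<le> mean Q f) (tilt P f l)"
    and "is_arg_max (\<lambda>l. l * g - ln (Zf P f l)) (\<lambda>l. 0 \<le> l) l"
    and "rel_entropy (tilt P f l) P = l * g - ln (Zf P f l)"
    and "err_exponent (\<lambda>n. iid_prob P n E) = ereal (rel_entropy (tilt P f l) P)"
proof -
  define Ds where "Ds = rel_entropy (tilt P f l) P"
  have Ts: "tilt P f l \<in> prob_simplex" by (rule tilt_simplex[where P=P and f=f, OF P(2)])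
  have Tp: "\<And>x. 0 < tilt P f l x" by (rule tilt_pos[where P=P and f=f, OF P(2)])
  have D_eq: "Ds = l * g - ln (Zf P f l)"
    unfolding Ds_def rel_entropy_tl[where P=P, OF P(2)] using l(3) by simp
  show "rel_entropy (tilt P f l) P = l * g - ln (Zf P f l)" using D_eq Ds_def by simp
  show "is_arg_min (\<lambda>Q. rel_entropy Q P) (\<lambda>Q. Q \<in> prob_simplex \<and> g \<le> mean Q f) (tilt P f l)"
    unfolding is_arg_min_def
  proof (rule conjI)
    show "tilt P f l \<in> prob_simplex \<and> g \<le> mean (tilt P f l) f" using Ts l(2) by simp
  next
    show "\<not> (\<exists>y. (y \<in> prob_simplex \<and> g \<le> mean y f) \<and> rel_entropy y P < rel_entropy (tilt P f l) P)"
    proof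
      assume "\<exists>y. (y \<in> prob_simplex \<and> g \<le> mean y f) \<and> rel_entropy y P < rel_entropy (tilt P f l) P"
      then obtain Q where Q: "Q \<in> prob_simplex" "g \<le> mean Q f" "rel_entropy Q P < Ds"
        unfolding Ds_def by blast
      have "l * g \<le> l * mean Q f" using Q(2) l(1) by (simp add: mult_left_mono)
      then show False using variational[where P=P and f=f and l=l, OF Q(1) P(2)] Q(3) D_eq by simp
    qed
  qed
  show "is_arg_max (\<lambda>l. l * g - ln (Zf P f l)) (\<lambda>l. 0 \<le> l) l"
    unfolding is_arg_max_def
  proof (intro conjI notI)
    show "0 \<le> l" by (rule l(1))
    assume "\<exists>y. 0 \<le> y \<and> l * g - ln (Zf P f l) < y * g - ln (Zf P f y)"
    then obtain l' where l': "0 \<le> l'" "Ds < l' * g - ln (Zf P f l')" using D_eq by auto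
    have "l' * g \<le> l' * mean (tilt P f l) f" using l(2) l'(1) by (simp add: mult_left_mono)
    then show False using variational[where P=P and f=f and l=l', OF Ts P(2)] l'(2) Ds_def by simp
  qed
  define X where "X n = - ln (iid_prob P n E) / real n" for n
  have P0: "\<And>x. 0 \<le> P x" using P(2) less_imp_le by blast
  obtain L where L: "0 \<le> L" "g < mean (tilt P f L) f" using big_tilt[where P=P and f=f and g=g, OF P(2) x1] by blast
  have R: "tilt P f L \<in> prob_simplex" "\<And>x. 0 < tilt P f L x" using tilt_simplex[where P=P and f=f, OF P(2)] tilt_pos[where P=P and f=f, OF P(2)] by auto
  have up: "eventually (\<lambda>n. X n < Ds + \<delta>) sequentially" if dl: "0 < \<delta>" for \<delta>
  proof -
    obtain Q where Q: "Q \<in> prob_simplex" "\<forall>x. 0 < Q x" "g < mean Q f" "rel_entropy Q P < Ds + \<delta>/3"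
      using approx[where P=P, OF P(2) Ts Tp l(2) R L(2), of "\<delta>/3"] dl unfolding Ds_def by auto
    have lb: "eventually (\<lambda>n. exp (- real n * (rel_entropy Q P + \<delta>/3)) / 2 \<le> iid_prob P n E) sequentially"
      by (rule lower_bound[where P=P, OF P(2) Q(1)]) (use Q dl El in auto)
    have small: "eventually (\<lambda>n. ln 2 / real n < \<delta>/3) sequentially"
    proof -
      have "(\<lambda>n. ln 2 / real n) \<longlonglongrightarrow> 0" by (rule lim_const_over_n)
      then show ?thesis by (rule order_tendstoD(2)) (use dl in simp)
    qed
    show ?thesis using lb small eventually_gt_at_top[of 0]
    proof eventually_elim
      case (elim n)
      define c where "c = exp (- real n * (rel_entropy Q P + \<delta>/3)) / 2"
      have c: "c > 0" by (simp add: c_def)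
      have "ln c \<le> ln (iid_prob P n E)" using elim(1) c unfolding c_def[symmetric] by simp
      moreover have "ln c = - real n * (rel_entropy Q P + \<delta>/3) - ln 2"
        by (simp add: c_def ln_div)
      ultimately have "- ln (iid_prob P n E) \<le> real n * (rel_entropy Q P + \<delta>/3) + ln 2" by simp
      then have "X n \<le> (real n * (rel_entropy Q P + \<delta>/3) + ln 2) / real n"
        unfolding X_def using elim(3) divide_right_mono[of "- ln (iid_prob P n E)" _ "real n"] by simp
      also have "\<dots> = rel_entropy Q P + \<delta>/3 + ln 2 / real n" using elim(3) by (simp add: field_simps)
      finally show ?case using elim(2) Q(4) by linarith
    qed
  qed
  have lo: "eventually (\<lambda>n. Ds \<le> X n) sequentially"
  proof -
    obtain Q where Q: "Q \<in> prob_simplex" "\<forall>x. 0 < Q x" "g < mean Q f"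
      using approx[where P=P, OF P(2) Ts Tp l(2) R L(2), of 1] by auto
    have lb: "eventually (\<lambda>n. exp (- real n * (rel_entropy Q P + 1)) / 2 \<le> iid_prob P n E) sequentially"
      by (rule lower_bound[where P=P, OF P(2) Q(1)]) (use Q El in auto)
    show ?thesis using lb eventually_gt_at_top[of 0]
    proof eventually_elim
      case (elim n)
      have pos: "0 < iid_prob P n E" using elim(1) exp_gt_zero[of "- real n * (rel_entropy Q P + 1)"] by linarith
      have "iid_prob P n E \<le> (\<Sum>a\<in>UNIV. P a * exp (l * (f a - g))) ^ n"
        by (rule chernoff[OF P0 l(1)]) (use Eu in force)
      also have "(\<Sum>a\<in>UNIV. P a * exp (l * (f a - g))) = exp (- Ds)"
      proof -
        have "(\<Sum>a\<in>UNIV. P a * exp (l * (f a - g))) = Zf P f l * exp (- (l * g))"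
          unfolding Zf_def sum_distrib_right
          by (rule sum.cong) (simp_all add: right_diff_distrib exp_diff exp_minus field_simps)
        also have "\<dots> = exp (- Ds)"
          unfolding D_eq using Zf_pos[of P f l, OF P(2)] by (simp add: exp_diff exp_minus field_simps)
        finally show ?thesis .
      qed
      also have "exp (- Ds) ^ n = exp (- (real n * Ds))" by (simp add: exp_of_nat_mult[symmetric])
      finally have "ln (iid_prob P n E) \<le> - (real n * Ds)" using pos by (metis ln_exp ln_le_cancel_iff exp_gt_zero)
      then have "real n * Ds \<le> - ln (iid_prob P n E)" by simp
      then show ?case unfolding X_def using elim(2) by (simp add: field_simps)
    qed
  qed
  have "X \<longlonglongrightarrow> Ds"
  proof (rule order_tendstoI)
    fix a assume "a < Ds"
    then show "eventually (\<lambda>n. a < X n) sequentially" using lo by (auto elim: eventually_mono)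
  next
    fix a assume "Ds < a"
    then show "eventually (\<lambda>n. X n < a) sequentially" using up[of "a - Ds"] by simp
  qed
  then have "(\<lambda>n. ereal (X n)) \<longlonglongrightarrow> ereal Ds" by (rule tendsto_ereal)
  then have "liminf (\<lambda>n. ereal (X n)) = ereal Ds" by (intro lim_imp_Liminf) simp_all
  then show "err_exponent (\<lambda>n. iid_prob P n E) = ereal (rel_entropy (tilt P f l) P)"
    unfolding err_exponent_def X_def Ds_def by simp
qed



lemma side:
  fixes P f :: "'a::finite \<Rightarrow> real"
  assumes P: "P \<in> prob_simplex" "\<And>x. 0 < P x" and x1: "\<exists>x1. g < f x1"
    and Eu: "\<And>xs. E xs \<Longrightarrow> real (length xs) * g \<le> sum_list (map f xs)"
    and El: "\<And>xs. real (length xs) * g < sum_list (map f xs) \<Longrightarrow> E xs"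
  shows "(mean P f \<le> g \<longrightarrow> (\<exists>l\<ge>0. mean (tilt P f l) f = g
            \<and> is_arg_min (\<lambda>Q. rel_entropy Q P) (\<lambda>Q. Q \<in> prob_simplex \<and> g \<le> mean Q f) (tilt P f l)
            \<and> err_exponent (\<lambda>n. iid_prob P n E) = ereal (rel_entropy (tilt P f l) P)))
      \<and> (\<not> mean P f \<le> g \<longrightarrow> is_arg_min (\<lambda>Q. rel_entropy Q P) (\<lambda>Q. Q \<in> prob_simplex \<and> g \<le> mean Q f) P
            \<and> err_exponent (\<lambda>n. iid_prob P n E) = 0)
      \<and> (\<exists>l. is_arg_max (\<lambda>l. l * g - ln (Zf P f l)) (\<lambda>l. 0 \<le> l) l
            \<and> err_exponent (\<lambda>n. iid_prob P n E) = ereal (l * g - ln (Zf P f l)))"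
proof (cases "mean P f \<le> g")
  case True
  obtain x1 where x1: "g < f x1" using x1 by blast
  obtain L where L: "0 \<le> L" "g < mean (tilt P f L) f" using big_tilt[where P=P and f=f and g=g, OF P(2) x1] by blast
  have m0: "mean (tilt P f 0) f \<le> g" using True tilt_zero[OF P(1)] by simp
  obtain l where l: "0 \<le> l" "l \<le> L" "mean (tilt P f l) f = g"
    using IVT'[of "\<lambda>l. mean (tilt P f l) f" 0 g L] m0 L cont_mean_tilt[where P=P, OF P(2)] by auto
  have c: "is_arg_min (\<lambda>Q. rel_entropy Q P) (\<lambda>Q. Q \<in> prob_simplex \<and> g \<le> mean Q f) (tilt P f l)"
     "is_arg_max (\<lambda>l. l * g - ln (Zf P f l)) (\<lambda>l. 0 \<le> l) l"
     "rel_entropy (tilt P f l) P = l * g - ln (Zf P f l)"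
     "err_exponent (\<lambda>n. iid_prob P n E) = ereal (rel_entropy (tilt P f l) P)"
    using core[where P=P and f=f and g=g and l=l and E=E, OF P x1 l(1)] l(3) Eu El by auto
  show ?thesis using True c l by auto
next
  case False
  obtain x1 where x1: "g < f x1" using x1 by blast
  have t0: "tilt P f 0 = P" by (rule tilt_zero[OF P(1)])
  have c: "is_arg_min (\<lambda>Q. rel_entropy Q P) (\<lambda>Q. Q \<in> prob_simplex \<and> g \<le> mean Q f) (tilt P f 0)"
     "is_arg_max (\<lambda>l. l * g - ln (Zf P f l)) (\<lambda>l. 0 \<le> l) 0"
     "rel_entropy (tilt P f 0) P = 0 * g - ln (Zf P f 0)"
     "err_exponent (\<lambda>n. iid_prob P n E) = ereal (rel_entropy (tilt P f 0) P)"
    using core[where P=P and f=f and g=g and l=0 and E=E, OF P x1] False t0 Eu El by auto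
  have "rel_entropy P P = 0" by (rule rel_entropy_self)
  then show ?thesis using False c t0 by (metis zero_ereal_def)
qed



lemma powr_tilt: "0 < (a::real) \<Longrightarrow> 0 < b \<Longrightarrow> a powr (- l) * b powr l = exp (l * ln (b / a))"
proof -
  assume ab: "0 < a" "0 < b"
  have nz: "a \<noteq> 0" "b \<noteq> 0" using ab by simp_all
  have "a powr (- l) * b powr l = exp (- l * ln a) * exp (l * ln b)" using nz by (simp add: powr_def)
  also have "\<dots> = exp (l * ln (b / a))" using ab by (simp add: exp_add[symmetric] ln_div algebra_simps)
  finally show ?thesis .
qed

lemma term_eq: "0 < (a::real) \<Longrightarrow> 0 < b \<Longrightarrow> p * a powr (- l) * b powr l = p * exp (l * ln (b / a))"
  by (simp add: powr_tilt mult.assoc)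

lemma Z_eq:
  assumes "\<And>x. 0 < A x" "\<And>x. 0 < B x"
  shows "(\<Sum>a\<in>UNIV. P a * A a powr (- l) * B a powr l) = Zf P (\<lambda>x. ln (B x / A x)) l"
  unfolding Zf_def using assms by (simp add: term_eq)

lemma tilted_eq:
  assumes "\<And>x. 0 < A x" "\<And>x. 0 < B x"
  shows "tilted P A B l = tilt P (\<lambda>x. ln (B x / A x)) l"
  unfolding tilted_def tilt_def Z_eq[OF assms, symmetric] using assms by (simp add: term_eq)

lemma mm_eq:
  assumes "\<And>x. 0 < A x" "\<And>x. 0 < B x" "\<And>x. 0 \<le> Q x"
  shows "mm_stat A B Q = mean Q (\<lambda>x. ln (B x / A x))"
proof -
  have "Q x * ln (Q x / A x) - Q x * ln (Q x / B x) = Q x * ln (B x / A x)" for x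
  proof (cases "Q x = 0")
    case False
    then have "Q x > 0" using assms(3)[of x] by simp
    then show ?thesis using assms(1,2)[of x] by (simp add: ln_div algebra_simps)
  qed simp
  then show ?thesis unfolding mm_stat_def rel_entropy_def mean_def by (simp add: sum_subtractf[symmetric])
qed

lemma sum_count: "(\<Sum>a\<in>UNIV. real (count_list xs a) * f a) = sum_list (map f xs)"
  for f :: "'a::finite \<Rightarrow> real"
proof (induction xs)
  case Nil then show ?case by simp
next
  case (Cons y xs)
  have "(\<Sum>a\<in>UNIV. real (count_list (y # xs) a) * f a)
      = (\<Sum>a\<in>UNIV. real (count_list xs a) * f a) + (\<Sum>a\<in>UNIV. (if a = y then f a else 0))"
    unfolding sum.distrib[symmetric] by (rule sum.cong) (auto simp: algebra_simps)
  also have "(\<Sum>a\<in>UNIV. (if a = y then f a else 0)) = f y" by simp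
  finally show ?case using Cons by simp
qed

lemma type_nonneg: "0 \<le> type_of xs a"
  unfolding type_of_def by simp

lemma mean_type:
  "mean (type_of xs) f * real (length xs) = sum_list (map f xs)" if "xs \<noteq> []"
  for f :: "'a::finite \<Rightarrow> real"
proof -
  have "mean (type_of xs) f = (\<Sum>a\<in>UNIV. real (count_list xs a) * f a) / real (length xs)"
    unfolding mean_def type_of_def by (simp add: sum_divide_distrib)
  then show ?thesis using that by (simp add: sum_count)
qed

lemma dec_iff:
  assumes "\<And>x. 0 < A x" "\<And>x. 0 < B x" "xs \<noteq> []"
  shows "decides1 A B g xs \<longleftrightarrow> real (length xs) * g \<le> sum_list (map (\<lambda>x. ln (B x / A x)) xs)"
proof -
  have n: "real (length xs) > 0" using assms(3) by simp
  have "decides1 A B g xs \<longleftrightarrow> g \<le> mean (type_of xs) (\<lambda>x. ln (B x / A x))"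
    unfolding decides1_def using mm_eq[where A=A and B=B and Q="type_of xs", OF assms(1,2) type_nonneg] by simp
  also have "\<dots> \<longleftrightarrow> g * real (length xs) \<le> mean (type_of xs) (\<lambda>x. ln (B x / A x)) * real (length xs)"
    using n by simp
  finally show ?thesis using mean_type[OF assms(3)] by (simp add: mult.commute)
qed



theorem theorem1:
  fixes P0 P1 hP0 hP1 :: "'a::finite \<Rightarrow> real" and g :: real
  assumes dist: "P0 \<in> prob_simplex" "P1 \<in> prob_simplex" "hP0 \<in> prob_simplex" "hP1 \<in> prob_simplex"
    and pos: "\<And>x. P0 x > 0" "\<And>x. P1 x > 0" "\<And>x. hP0 x > 0" "\<And>x. hP1 x > 0"
    and nondeg0: "\<exists>x. ln (hP1 x / hP0 x) > g"
    and nondeg1: "\<exists>x. ln (hP1 x / hP0 x) < g"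
  defines "Q0 \<equiv> {Q \<in> prob_simplex. mm_stat hP0 hP1 Q \<ge> g}"
    and "Q1 \<equiv> {Q \<in> prob_simplex. mm_stat hP0 hP1 Q \<le> g}"
    and "E0 \<equiv> err_exponent (err0 P0 hP0 hP1 g)"
    and "E1 \<equiv> err_exponent (err1 P1 hP0 hP1 g)"
  shows
    "(mm_stat hP0 hP1 P0 \<le> g \<longrightarrow>
        (\<exists>l0\<ge>0. mm_stat hP0 hP1 (tilted P0 hP0 hP1 l0) = g
           \<and> is_arg_min (\<lambda>Q. rel_entropy Q P0) (\<lambda>Q. Q \<in> Q0) (tilted P0 hP0 hP1 l0)
           \<and> E0 = ereal (rel_entropy (tilted P0 hP0 hP1 l0) P0)))
     \<and> (\<not> mm_stat hP0 hP1 P0 \<le> g \<longrightarrow>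
        is_arg_min (\<lambda>Q. rel_entropy Q P0) (\<lambda>Q. Q \<in> Q0) P0 \<and> E0 = 0)
     \<and> (mm_stat hP0 hP1 P1 \<ge> g \<longrightarrow>
        (\<exists>l1\<ge>0. mm_stat hP0 hP1 (tilted P1 hP1 hP0 l1) = g
           \<and> is_arg_min (\<lambda>Q. rel_entropy Q P1) (\<lambda>Q. Q \<in> Q1) (tilted P1 hP1 hP0 l1)
           \<and> E1 = ereal (rel_entropy (tilted P1 hP1 hP0 l1) P1)))
     \<and> (\<not> mm_stat hP0 hP1 P1 \<ge> g \<longrightarrow>
        is_arg_min (\<lambda>Q. rel_entropy Q P1) (\<lambda>Q. Q \<in> Q1) P1 \<and> E1 = 0)
     \<and> (\<exists>l. is_arg_max (\<lambda>l. l * g - ln (\<Sum>x\<in>UNIV. P0 x * hP0 x powr (- l) * hP1 x powr l))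
              (\<lambda>l. l \<ge> 0) l
           \<and> E0 = ereal (l * g - ln (\<Sum>x\<in>UNIV. P0 x * hP0 x powr (- l) * hP1 x powr l)))
     \<and> (\<exists>l. is_arg_max (\<lambda>l. - l * g - ln (\<Sum>x\<in>UNIV. hP0 x powr l * P1 x * hP1 x powr (- l)))
              (\<lambda>l. l \<ge> 0) l
           \<and> E1 = ereal (- l * g - ln (\<Sum>x\<in>UNIV. hP0 x powr l * P1 x * hP1 x powr (- l))))"
proof -
  have p0: "\<And>x. 0 < P0 x" and p1: "\<And>x. 0 < P1 x" and h0: "\<And>x. 0 < hP0 x" and h1: "\<And>x. 0 < hP1 x"
    using pos by auto
  define f0 where "f0 = (\<lambda>x. ln (hP1 x / hP0 x))"
  define f1 where "f1 = (\<lambda>x. ln (hP0 x / hP1 x))"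
  have f1neg: "\<And>x. f1 x = - f0 x" unfolding f0_def f1_def using h0 h1 by (simp add: ln_div)
  have f1eq: "f1 = (\<lambda>x. - f0 x)" using f1neg by auto
  have sl1: "\<And>xs. sum_list (map f1 xs) = - sum_list (map f0 xs)" unfolding f1eq by (rule sum_list_neg)
  have mean1: "\<And>Q. mean Q f1 = - mean Q f0" unfolding mean_def f1eq by (simp add: sum_negf)
  have dec: "\<And>xs. xs \<noteq> [] \<Longrightarrow> decides1 hP0 hP1 g xs \<longleftrightarrow> real (length xs) * g \<le> sum_list (map f0 xs)"
    unfolding f0_def by (rule dec_iff[OF h0 h1])
  have x0: "\<exists>x1. g < f0 x1" using nondeg0 unfolding f0_def by blast
  have x1: "\<exists>x1. - g < f1 x1" using nondeg1 unfolding f1neg f0_def by auto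
  have Eu0: "real (length xs) * g \<le> sum_list (map f0 xs)" if "decides1 hP0 hP1 g xs" for xs
    using that dec[of xs] by (cases "xs = []") auto
  have El0: "decides1 hP0 hP1 g xs" if "real (length xs) * g < sum_list (map f0 xs)" for xs
    using that dec[of xs] by (cases "xs = []") auto
  have Eu1: "real (length xs) * (- g) \<le> sum_list (map f1 xs)" if "\<not> decides1 hP0 hP1 g xs" for xs
    using that dec[of xs] sl1[of xs] by (cases "xs = []") auto
  have El1: "\<not> decides1 hP0 hP1 g xs" if "real (length xs) * (- g) < sum_list (map f1 xs)" for xs
    using that dec[of xs] sl1[of xs] by (cases "xs = []") auto
  note S0 = side[where P=P0 and f=f0 and g=g and E="decides1 hP0 hP1 g", OF dist(1) p0 x0 Eu0 El0]
  note S1 = side[where P=P1 and f=f1 and g="- g" and E="\<lambda>xs. \<not> decides1 hP0 hP1 g xs", OF dist(2) p1 x1 Eu1 El1]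
  note S0a = S0[THEN conjunct1] and S0b = S0[THEN conjunct2, THEN conjunct1] and S0c = S0[THEN conjunct2, THEN conjunct2]
  note S1a = S1[THEN conjunct1] and S1b = S1[THEN conjunct2, THEN conjunct1] and S1c = S1[THEN conjunct2, THEN conjunct2]
  have e0: "E0 = err_exponent (\<lambda>n. iid_prob P0 n (decides1 hP0 hP1 g))"
    unfolding E0_def err0_def by simp
  have e1: "E1 = err_exponent (\<lambda>n. iid_prob P1 n (\<lambda>xs. \<not> decides1 hP0 hP1 g xs))"
    unfolding E1_def err1_def by simp
  have nn: "\<And>Q x. Q \<in> prob_simplex \<Longrightarrow> 0 \<le> Q x" by (auto simp: prob_simplex_def)
  have mm0: "\<And>Q. Q \<in> prob_simplex \<Longrightarrow> mm_stat hP0 hP1 Q = mean Q f0"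
    unfolding f0_def by (rule mm_eq[OF h0 h1]) (simp add: nn)
  have q0: "(\<lambda>Q. Q \<in> Q0) = (\<lambda>Q. Q \<in> prob_simplex \<and> g \<le> mean Q f0)"
    unfolding Q0_def using mm0 by auto
  have q1: "(\<lambda>Q. Q \<in> Q1) = (\<lambda>Q. Q \<in> prob_simplex \<and> - g \<le> mean Q f1)"
    unfolding Q1_def using mm0 mean1 by auto
  have t0: "\<And>l. tilted P0 hP0 hP1 l = tilt P0 f0 l" unfolding f0_def by (rule tilted_eq[OF h0 h1])
  have t1: "\<And>l. tilted P1 hP1 hP0 l = tilt P1 f1 l" unfolding f1_def by (rule tilted_eq[OF h1 h0])
  have ts0: "\<And>l. tilt P0 f0 l \<in> prob_simplex" by (rule tilt_simplex[OF p0])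
  have ts1: "\<And>l. tilt P1 f1 l \<in> prob_simplex" by (rule tilt_simplex[OF p1])
  have z0: "(\<lambda>l. l * g - ln (\<Sum>x\<in>UNIV. P0 x * hP0 x powr (- l) * hP1 x powr l)) = (\<lambda>l. l * g - ln (Zf P0 f0 l))"
    unfolding f0_def Z_eq[OF h0 h1] ..
  have z1: "(\<lambda>l. - l * g - ln (\<Sum>x\<in>UNIV. hP0 x powr l * P1 x * hP1 x powr (- l))) = (\<lambda>l. l * (- g) - ln (Zf P1 f1 l))"
  proof
    fix l
    have "(\<Sum>x\<in>UNIV. hP0 x powr l * P1 x * hP1 x powr (- l)) = (\<Sum>x\<in>UNIV. P1 x * hP1 x powr (- l) * hP0 x powr l)"
      by (simp add: algebra_simps)
    also have "\<dots> = Zf P1 f1 l" unfolding f1_def by (rule Z_eq[OF h1 h0])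
    finally show "- l * g - ln (\<Sum>x\<in>UNIV. hP0 x powr l * P1 x * hP1 x powr (- l)) = l * (- g) - ln (Zf P1 f1 l)"
      by simp
  qed
  have mP0: "mm_stat hP0 hP1 P0 = mean P0 f0" by (rule mm0[OF dist(1)])
  have mP1: "mm_stat hP0 hP1 P1 = - mean P1 f1" using mm0[OF dist(2)] mean1 by simp
  have mT0: "\<And>l. mm_stat hP0 hP1 (tilt P0 f0 l) = mean (tilt P0 f0 l) f0"
    using mm0 ts0 by blast
  have mT1: "\<And>l. mm_stat hP0 hP1 (tilt P1 f1 l) = - mean (tilt P1 f1 l) f1"
    using mm0 ts1 mean1 by simp
  have A1: "mm_stat hP0 hP1 P0 \<le> g \<longrightarrow>
        (\<exists>l0\<ge>0. mm_stat hP0 hP1 (tilted P0 hP0 hP1 l0) = g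
           \<and> is_arg_min (\<lambda>Q. rel_entropy Q P0) (\<lambda>Q. Q \<in> Q0) (tilted P0 hP0 hP1 l0)
           \<and> E0 = ereal (rel_entropy (tilted P0 hP0 hP1 l0) P0))"
    unfolding t0 mP0 mT0 q0 e0 by (rule S0a)
  have A2: "\<not> mm_stat hP0 hP1 P0 \<le> g \<longrightarrow>
        is_arg_min (\<lambda>Q. rel_entropy Q P0) (\<lambda>Q. Q \<in> Q0) P0 \<and> E0 = 0"
    unfolding mP0 q0 e0 by (rule S0b)
  have A3: "mm_stat hP0 hP1 P1 \<ge> g \<longrightarrow>
        (\<exists>l1\<ge>0. mm_stat hP0 hP1 (tilted P1 hP1 hP0 l1) = g
           \<and> is_arg_min (\<lambda>Q. rel_entropy Q P1) (\<lambda>Q. Q \<in> Q1) (tilted P1 hP1 hP0 l1)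
           \<and> E1 = ereal (rel_entropy (tilted P1 hP1 hP0 l1) P1))"
  proof
    assume "mm_stat hP0 hP1 P1 \<ge> g"
    then have "mean P1 f1 \<le> - g" unfolding mP1 by simp
    then obtain l where "l \<ge> 0" "mean (tilt P1 f1 l) f1 = - g"
        "is_arg_min (\<lambda>Q. rel_entropy Q P1) (\<lambda>Q. Q \<in> prob_simplex \<and> - g \<le> mean Q f1) (tilt P1 f1 l)"
        "err_exponent (\<lambda>n. iid_prob P1 n (\<lambda>xs. \<not> decides1 hP0 hP1 g xs)) = ereal (rel_entropy (tilt P1 f1 l) P1)"
      using S1a by blast
    then show "\<exists>l1\<ge>0. mm_stat hP0 hP1 (tilted P1 hP1 hP0 l1) = g
           \<and> is_arg_min (\<lambda>Q. rel_entropy Q P1) (\<lambda>Q. Q \<in> Q1) (tilted P1 hP1 hP0 l1)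
           \<and> E1 = ereal (rel_entropy (tilted P1 hP1 hP0 l1) P1)"
      unfolding t1 mT1 q1 e1 by (intro exI[of _ l]) simp
  qed
  have A4: "\<not> mm_stat hP0 hP1 P1 \<ge> g \<longrightarrow>
        is_arg_min (\<lambda>Q. rel_entropy Q P1) (\<lambda>Q. Q \<in> Q1) P1 \<and> E1 = 0"
  proof
    assume "\<not> mm_stat hP0 hP1 P1 \<ge> g"
    then have "\<not> mean P1 f1 \<le> - g" unfolding mP1 by simp
    then show "is_arg_min (\<lambda>Q. rel_entropy Q P1) (\<lambda>Q. Q \<in> Q1) P1 \<and> E1 = 0"
      unfolding q1 e1 using S1b by blast
  qed
  have zp0: "\<And>l. (\<Sum>x\<in>UNIV. P0 x * hP0 x powr (- l) * hP1 x powr l) = Zf P0 f0 l"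
    unfolding f0_def by (rule Z_eq[OF h0 h1])
  have zp1: "\<And>l. (\<Sum>x\<in>UNIV. hP0 x powr l * P1 x * hP1 x powr (- l)) = Zf P1 f1 l"
  proof -
    fix l
    have "(\<Sum>x\<in>UNIV. hP0 x powr l * P1 x * hP1 x powr (- l)) = (\<Sum>x\<in>UNIV. P1 x * hP1 x powr (- l) * hP0 x powr l)"
      by (simp add: algebra_simps)
    also have "\<dots> = Zf P1 f1 l" unfolding f1_def by (rule Z_eq[OF h1 h0])
    finally show "(\<Sum>x\<in>UNIV. hP0 x powr l * P1 x * hP1 x powr (- l)) = Zf P1 f1 l" .
  qed
  have A5: "\<exists>l. is_arg_max (\<lambda>l. l * g - ln (\<Sum>x\<in>UNIV. P0 x * hP0 x powr (- l) * hP1 x powr l))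
              (\<lambda>l. l \<ge> 0) l
           \<and> E0 = ereal (l * g - ln (\<Sum>x\<in>UNIV. P0 x * hP0 x powr (- l) * hP1 x powr l))"
    unfolding zp0 e0 by (rule S0c)
  have A6: "\<exists>l. is_arg_max (\<lambda>l. - l * g - ln (\<Sum>x\<in>UNIV. hP0 x powr l * P1 x * hP1 x powr (- l)))
              (\<lambda>l. l \<ge> 0) l
           \<and> E1 = ereal (- l * g - ln (\<Sum>x\<in>UNIV. hP0 x powr l * P1 x * hP1 x powr (- l)))"
    unfolding zp1 e1 using S1c by simp
  show ?thesis by (intro conjI A1 A2 A3 A4 A5 A6)
qed

end
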